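(* Let $Z$ be a topological space which is the disjoint union $Z=X\sqcup Y$ of two subsets (with subspace topologies), with $X$ open in $Z$. Define $f:\mathrm{Closed}(X)\to\mathrm{Closed}(Y)$ by $f(A)=\mathrm{Cl}_Z(A)\cap Y$ and $g:\mathrm{Closed}(Y)\to\mathrm{Closed}(X)$ by $g(B)=\mathrm{Cl}_Z(B)\cap X$. Then $(f,g)$ is an admissible pair and $Z$ and $X+_{f,g}Y$ have the same topology.
   Context: $\mathrm{Closed}(A)$ is the set of closed subsets of a space $A$. A map $f:\mathrm{Closed}(X)\to\mathrm{Closed}(Y)$ is admissible if $f(\emptyset)=\emptyset$ and $f(A_1\cup A_2)=f(A_1)\cup f(A_2)$. An admissible pair is a pair of admissible maps $f:\mathrm{Closed}(X)\to\mathrm{Closed}(Y)$, $g:\mathrm{Closed}(Y)\to\mathrm{Closed}(X)$ with $g(f(A))\subseteq A$ and $f(g(B))\subseteq B$ for all closed $A\subseteq X$, $B\subseteq Y$. Then $X+_{f,g}Y$ is the set $X\sqcup Y$ with the topology whose closed sets are the $D$ with $D\cap X$ closed in $X$, $D\cap Y$ closed in $Y$, $f(D\cap X)\subseteq D$ and $g(D\cap Y)\subseteq D$. *)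

theory Defs
  imports "HOL-Analysis.Analysis"
begin

definition admissible_map :: "'a topology \<Rightarrow> 'b topology \<Rightarrow> ('a set \<Rightarrow> 'b set) \<Rightarrow> bool" where
  "admissible_map X Y f \<longleftrightarrow>
     (\<forall>A. closedin X A \<longrightarrow> closedin Y (f A)) \<and>
     f {} = {} \<and>
     (\<forall>A1 A2. closedin X A1 \<and> closedin X A2 \<longrightarrow> f (A1 \<union> A2) = f A1 \<union> f A2)"

definition admissible_pair ::
  "'a topology \<Rightarrow> 'b topology \<Rightarrow> ('a set \<Rightarrow> 'b set) \<Rightarrow> ('b set \<Rightarrow> 'a set) \<Rightarrow> bool" where
  "admissible_pair X Y f g \<longleftrightarrow>
     admissible_map X Y f \<and> admissible_map Y X g \<and>
     (\<forall>A. closedin X A \<longrightarrow> g (f A) \<subseteq> A) \<and>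
     (\<forall>B. closedin Y B \<longrightarrow> f (g B) \<subseteq> B)"

text \<open>Closed sets of X +_{f,g} Y, for X and Y topologies on disjoint carriers
  inside a common type (so that X \<squnion> Y is topspace X \<union> topspace Y).\<close>
definition glue_closed ::
  "'a topology \<Rightarrow> 'a topology \<Rightarrow> ('a set \<Rightarrow> 'a set) \<Rightarrow> ('a set \<Rightarrow> 'a set) \<Rightarrow> 'a set \<Rightarrow> bool" where
  "glue_closed X Y f g D \<longleftrightarrow>
     D \<subseteq> topspace X \<union> topspace Y \<and>
     closedin X (D \<inter> topspace X) \<and> closedin Y (D \<inter> topspace Y) \<and>
     f (D \<inter> topspace X) \<subseteq> D \<and> g (D \<inter> topspace Y) \<subseteq> D"

end

theory Submission
  imports Defs
begin

theorem mainTheorem9: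
  fixes Z :: "'a topology" and X Y :: "'a set"
  assumes "X \<union> Y = topspace Z" and "X \<inter> Y = {}" and "openin Z X"
  defines "f \<equiv> (\<lambda>A. Z closure_of A \<inter> Y)"
      and "g \<equiv> (\<lambda>B. Z closure_of B \<inter> X)"
  shows "admissible_pair (subtopology Z X) (subtopology Z Y) f g \<and>
         (\<forall>D. closedin Z D \<longleftrightarrow> glue_closed (subtopology Z X) (subtopology Z Y) f g D)"
proof -
  have tX: "topspace (subtopology Z X) = X" and tY: "topspace (subtopology Z Y) = Y"
    using assms(1) by auto
  have XY: "X \<inter> Z closure_of T = {}" if "T \<subseteq> Y" for T
    using openin_Int_closure_of_eq_empty[OF assms(3), of T] assms(2) that by blast
  have cX: "X \<inter> Z closure_of T = T" if "closedin (subtopology Z X) T" for T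
    using that by (simp add: closedin_Int_closure_of)
  have cY: "Y \<inter> Z closure_of T = T" if "closedin (subtopology Z Y) T" for T
    using that by (simp add: closedin_Int_closure_of)
  have mf: "admissible_map (subtopology Z X) (subtopology Z Y) f"
    unfolding admissible_map_def f_def
  proof (intro conjI allI impI)
    fix A show "closedin (subtopology Z Y) (Z closure_of A \<inter> Y)"
      by (metis closedin_subtopology_Int_closed closedin_closure_of Int_commute)
  qed (simp_all add: Int_Un_distrib2)
  have mg: "admissible_map (subtopology Z Y) (subtopology Z X) g"
    unfolding admissible_map_def g_def
  proof (intro conjI allI impI)
    fix A show "closedin (subtopology Z X) (Z closure_of A \<inter> X)"
      by (metis closedin_subtopology_Int_closed closedin_closure_of Int_commute)
  qed (simp_all add: Int_Un_distrib2)
  have p1: "g (f A) \<subseteq> A" for A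
    proof -
    have "X \<inter> Z closure_of (Z closure_of A \<inter> Y) = {}" by (rule XY) blast
    then show ?thesis unfolding f_def g_def by blast
  qed
  have p2: "f (g B) \<subseteq> B" if "closedin (subtopology Z Y) B" for B
  proof -
    have "Z closure_of (Z closure_of B \<inter> X) \<subseteq> Z closure_of B"
      by (metis closure_of_closure_of closure_of_mono inf_le1)
    then show ?thesis unfolding f_def g_def using cY[OF that] by auto
  qed
  have AP: "admissible_pair (subtopology Z X) (subtopology Z Y) f g"
    unfolding admissible_pair_def using mf mg p1 p2 by blast
  have "closedin Z D \<longleftrightarrow> glue_closed (subtopology Z X) (subtopology Z Y) f g D" for D
  proof
    assume D: "closedin Z D"
    have c1: "Z closure_of (D \<inter> X) \<subseteq> D" "Z closure_of (D \<inter> Y) \<subseteq> D"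
      using D by (simp_all add: closure_of_minimal)
    have s: "D \<subseteq> X \<union> Y" using closedin_subset[OF D] assms(1) by simp
    have a1: "closedin (subtopology Z X) (D \<inter> X)"
      using closedin_subtopology_Int_closed[OF D, of X] by (simp add: Int_commute)
    have a2: "closedin (subtopology Z Y) (D \<inter> Y)"
      using closedin_subtopology_Int_closed[OF D, of Y] by (simp add: Int_commute)
    have a3: "f (D \<inter> X) \<subseteq> D" unfolding f_def using c1(1) by blast
    have a4: "g (D \<inter> Y) \<subseteq> D" unfolding g_def using c1(2) by blast
    show "glue_closed (subtopology Z X) (subtopology Z Y) f g D"
      unfolding glue_closed_def tX tY using s a1 a2 a3 a4 by blast
  next
    assume G: "glue_closed (subtopology Z X) (subtopology Z Y) f g D"
    then have D: "D \<subseteq> X \<union> Y" and cx: "closedin (subtopology Z X) (D \<inter> X)"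
      and cy: "closedin (subtopology Z Y) (D \<inter> Y)"
      and fx: "Z closure_of (D \<inter> X) \<inter> Y \<subseteq> D" and gy: "Z closure_of (D \<inter> Y) \<inter> X \<subseteq> D"
      unfolding glue_closed_def tX tY f_def g_def by auto
    have eq: "D = (D \<inter> X) \<union> (D \<inter> Y)" using D by blast
    have "Z closure_of D = Z closure_of (D \<inter> X) \<union> Z closure_of (D \<inter> Y)"
      using closure_of_Un[of Z "D \<inter> X" "D \<inter> Y"] eq by metis
    moreover have "Z closure_of (D \<inter> X) \<subseteq> D"
    proof -
      have "Z closure_of (D \<inter> X) \<subseteq> X \<union> Y"
        using closure_of_subset_topspace[of Z] assms(1) by simp
      then show ?thesis using cX[OF cx] fx by blast
    qed
    moreover have "Z closure_of (D \<inter> Y) \<subseteq> D"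
    proof -
      have "Z closure_of (D \<inter> Y) \<subseteq> X \<union> Y"
        using closure_of_subset_topspace[of Z] assms(1) by simp
      then show ?thesis using cY[OF cy] gy by blast
    qed
    ultimately have "Z closure_of D \<subseteq> D" by blast
    then show "closedin Z D"
      using D assms(1) closure_of_subset_eq[of D Z] by simp
  qed
  then show ?thesis using AP by blast
qed

end
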